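(* Let $v\in\mathbb{C}$ and let $S$ be a fixed positive integer. As $n\to\infty$, \begin{align*} \int_{1/2}^{1}e^{n(1-z+\log z)}z^v\,dz&=\sum_{s=0}^{S-1}\Gamma\!\left(\frac{s+1}{2}\right)\frac{(-1)^s\beta_s(v)}{n^{(s+1)/2}}+O\!\left(\frac{1}{n^{(S+1)/2}}\right),\\ \int_{1}^{3/2}e^{n(1-z+\log z)}z^v\,dz&=\sum_{s=0}^{S-1}\Gamma\!\left(\frac{s+1}{2}\right)\frac{\beta_s(v)}{n^{(s+1)/2}}+O\!\left(\frac{1}{n^{(S+1)/2}}\right), \end{align*} where \[ \beta_s(v)=\sum_{m=0}^{s}(-1)^m\binom{v}{s-m}\sum_{k=0}^{m}2^{(s-1)/2+k}\binom{-(s+1)/2}{k}\mathcal{A}_{m,k}\!\left(\tfrac13,\tfrac14,\tfrac15,\dots\right). \]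
   Context: De Moivre polynomial $\mathcal{A}_{n,k}(a_1,a_2,\dots)$: coefficient of $x^n$ in $(a_1x+a_2x^2+\cdots)^k$. For complex $x$ and integer $j\geq0$, $\binom{x}{j}=x(x-1)\cdots(x-j+1)/j!$. $z^v=e^{v\log z}$ for $z>0$. *)

theory Defs
  imports "HOL-Analysis.Analysis" "HOL-Computational_Algebra.Formal_Power_Series"
          "HOL-Library.Landau_Symbols"
begin

definition de_moivre :: "nat \<Rightarrow> nat \<Rightarrow> (nat \<Rightarrow> complex) \<Rightarrow> complex" where
  "de_moivre n k a = fps_nth ((Abs_fps (\<lambda>j. if j = 0 then 0 else a j)) ^ k) n"

text \<open>beta_s(v); the sequence (1/3, 1/4, 1/5, ...) is a_j = 1/(j+2).\<close>
definition beta :: "nat \<Rightarrow> complex \<Rightarrow> complex" where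
  "beta s v = (\<Sum>m=0..s. (-1)^m * (v gchoose (s - m)) *
     (\<Sum>k=0..m. complex_of_real (2 powr ((real s - 1) / 2 + real k)) *
        ((- (of_nat s + 1) / 2 :: complex) gchoose k) *
        de_moivre m k (\<lambda>j. 1 / (of_nat j + 2))))"

end

theory Submission
  imports Defs "HOL-Complex_Analysis.Complex_Analysis" "HOL-Probability.Probability" "HOL-Real_Asymp.Real_Asymp"
begin

definition PsiF :: "complex fps" where "PsiF = Abs_fps (\<lambda>j. 2 * (-1)^j / (of_nat j + 2))"
definition BF :: "complex fps" where "BF = PsiF - 1"
definition PF :: "complex \<Rightarrow> complex fps" where "PF a = fps_binomial a oo BF"
definition WF :: "complex fps" where "WF = fps_X * PF (1/2)"
definition cc :: "complex \<Rightarrow> nat \<Rightarrow> complex" where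
  "cc v s = (PF (-(of_nat s + 1)/2) * fps_binomial v) $ s"

lemma BF0: "BF $ 0 = 0" by (simp add: BF_def PsiF_def)

lemma PF_add: "PF (a+b) = PF a * PF b"
  by (simp add: PF_def fps_binomial_add_mult fps_compose_mult_distrib[OF BF0])

lemma PF_0: "PF 0 = 1" by (simp add: PF_def)
lemma PF_nth0 [simp]: "PF a $ 0 = 1" by (simp add: PF_def)

lemma PF_power: "PF a ^ n = PF (of_nat n * a)"
proof (induction n)
  case 0 then show ?case by (simp add: PF_0)
next
  case (Suc n)
  have "PF a ^ Suc n = PF a * PF (of_nat n * a)" using Suc by simp
  also have "\<dots> = PF (a + of_nat n * a)" by (simp add: PF_add)
  finally show ?case by (simp add: algebra_simps)
qed

lemma fps_deriv_binomial: "fps_deriv (fps_binomial a) = fps_const a * fps_binomial (a - 1)"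
  by (rule fps_ext) (simp add: gbinomial_absorption[simplified])

lemma PF_deriv: "fps_deriv (PF a) = fps_const a * PF (a - 1) * fps_deriv PsiF"
proof -
  have "fps_deriv (PF a) = (fps_deriv (fps_binomial a) oo BF) * fps_deriv BF"
    unfolding PF_def by (rule fps_compose_deriv[OF BF0])
  also have "fps_deriv (fps_binomial a) oo BF = fps_const a * PF (a - 1)"
    by (simp add: fps_deriv_binomial fps_compose_mult_distrib[OF BF0] PF_def)
  also have "fps_deriv BF = fps_deriv PsiF" by (simp add: BF_def)
  finally show ?thesis .
qed

lemma keyK: "(PF (-(of_nat s+1)/2) * (WF ^ j * fps_deriv WF)) $ s = (if j = s then 1 else 0)"
proof -
  define b :: complex where "b = (of_nat j - of_nat s)/2"
  define D where "D = fps_deriv PsiF"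
  have dU: "fps_deriv (PF (1/2)) = fps_const (1/2) * PF (-1/2) * D"
    using PF_deriv[of "1/2"] by (simp add: D_def)
  have dW: "fps_deriv WF = PF (1/2) + fps_X * (fps_const (1/2) * PF (-1/2) * D)"
    by (simp add: WF_def dU)
  have Wj: "WF ^ j = fps_X ^ j * PF (of_nat j / 2)"
    by (simp add: WF_def power_mult_distrib PF_power)
  have e1: "PF b = PF (-(of_nat s+1)/2) * PF (of_nat j / 2) * PF (1/2)"
  proof -
    have "b = -(of_nat s+1)/2 + of_nat j / 2 + 1/2" by (simp add: b_def field_simps)
    then show ?thesis by (simp only: PF_add)
  qed
  have e2: "PF (b - 1) = PF (-(of_nat s+1)/2) * PF (of_nat j / 2) * PF (-1/2)"
  proof -
    have "b - 1 = -(of_nat s+1)/2 + of_nat j / 2 + -1/2" by (simp add: b_def field_simps)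
    then show ?thesis by (simp only: PF_add)
  qed
  have Q: "PF (-(of_nat s+1)/2) * (WF ^ j * fps_deriv WF)
      = fps_X ^ j * (PF b + fps_X * (fps_const (1/2) * PF (b - 1) * D))"
    unfolding Wj dW e1 e2 by (simp add: algebra_simps)
  show ?thesis
  proof (cases "s < j")
    case True then show ?thesis unfolding Q by (simp add: fps_X_power_mult_nth)
  next
    case False
    define r where "r = s - j"
    have sr: "s = j + r" using False by (simp add: r_def)
    show ?thesis
    proof (cases "r = 0")
      case True then show ?thesis unfolding Q using sr by (simp add: fps_X_power_mult_nth)
    next
      case False
      have bne: "b \<noteq> 0" using False sr by (simp add: b_def)
      have b2: "2 * b = - of_nat r" using sr by (simp add: b_def)
      have "fps_const (1/2) * PF (b - 1) * D = fps_const (1/(2*b)) * fps_deriv (PF b)"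
        using bne by (simp add: PF_deriv D_def fps_const_mult[symmetric] mult.assoc[symmetric])
      then have "(fps_const (1/2) * PF (b - 1) * D) $ (r - 1) = 1/(2*b) * (of_nat r * PF b $ r)"
        using False by simp
      also have "\<dots> = - (PF b $ r)" using False b2 by (simp add: field_simps)
      finally have "(fps_const (1/2) * PF (b - 1) * D) $ (r - 1) = - (PF b $ r)" .
      then show ?thesis unfolding Q using sr False by (simp add: fps_X_power_mult_nth)
    qed
  qed
qed

definition EF :: "complex \<Rightarrow> nat \<Rightarrow> complex fps" where
  "EF v S = fps_binomial v - (\<Sum>s<S. fps_const (cc v s) * (WF ^ s * fps_deriv WF))"

lemma EF_L:
  assumes "s < S"
  shows "(PF (-(of_nat s+1)/2) * EF v S) $ s = 0"
proof -
  have e: "PF (-(of_nat s+1)/2) * EF v S = PF (-(of_nat s+1)/2) * fps_binomial v -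
     (\<Sum>j<S. fps_const (cc v j) * (PF (-(of_nat s+1)/2) * (WF ^ j * fps_deriv WF)))"
    unfolding EF_def by (simp add: right_diff_distrib sum_distrib_left mult.left_commute)
  have "(PF (-(of_nat s+1)/2) * EF v S) $ s = cc v s -
     (\<Sum>j<S. cc v j * (PF (-(of_nat s+1)/2) * (WF ^ j * fps_deriv WF)) $ s)"
    unfolding e cc_def by (simp add: fps_sum_nth)
  also have "\<dots> = cc v s - (\<Sum>j<S. cc v j * (if j = s then 1 else 0))"
    by (simp only: keyK)
  also have "\<dots> = 0" using assms by (simp add: if_distrib sum.delta' cong: if_cong)
  finally show ?thesis .
qed

lemma EF_vanish:
  assumes "j < S"
  shows "EF v S $ j = 0"
  using assms
proof (induction j rule: less_induct)
  case (less j)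
  have "(PF (-(of_nat j+1)/2) * EF v S) $ j =
      (\<Sum>i=0..j. PF (-(of_nat j+1)/2) $ i * EF v S $ (j - i))"
    by (simp add: fps_mult_nth)
  also have "\<dots> = PF (-(of_nat j+1)/2) $ 0 * EF v S $ (j - 0)"
  proof -
    have "(\<Sum>i=0..j. PF (-(of_nat j+1)/2) $ i * EF v S $ (j - i)) =
          (\<Sum>i\<in>{0}. PF (-(of_nat j+1)/2) $ i * EF v S $ (j - i))"
      by (rule sum.mono_neutral_right) (use less in auto)
    then show ?thesis by simp
  qed
  also have "\<dots> = EF v S $ j" by simp
  finally show ?case using EF_L[OF less.prems] by simp
qed

definition GF :: "complex fps" where
  "GF = Abs_fps (\<lambda>j. if j = 0 then 0 else 1 / (of_nat j + 2))"

lemma BF_alt: "BF = fps_const 2 * (GF oo (- fps_X))"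
  by (rule fps_ext) (simp add: BF_def PsiF_def GF_def fps_compose_uminus')

lemma BF_power_nth: "(BF ^ k) $ m = 2 ^ k * (-1) ^ m * de_moivre m k (\<lambda>j. 1 / (of_nat j + 2))"
proof -
  have "BF ^ k = fps_const (2 ^ k) * (GF ^ k oo (- fps_X))"
    by (simp add: BF_alt power_mult_distrib fps_compose_power[symmetric])
  then show ?thesis
    by (simp add: fps_compose_uminus' de_moivre_def GF_def)
qed

lemma PF_nth: "PF a $ m = (\<Sum>k=0..m. (a gchoose k) * (2 ^ k * (-1) ^ m * de_moivre m k (\<lambda>j. 1 / (of_nat j + 2))))"
  by (simp add: PF_def fps_compose_nth BF_power_nth)

lemma beta_eq: "beta s v = complex_of_real (2 powr ((real s - 1) / 2)) * cc v s"
proof -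
  have "cc v s = (\<Sum>m=0..s. PF (-(of_nat s + 1)/2) $ m * (v gchoose (s - m)))"
    by (simp add: cc_def fps_mult_nth)
  then have "complex_of_real (2 powr ((real s - 1) / 2)) * cc v s =
     (\<Sum>m=0..s. (\<Sum>k=0..m. complex_of_real (2 powr ((real s - 1) / 2)) *
        ((v gchoose (s - m)) * ((-(of_nat s + 1)/2) gchoose k) * (2 ^ k * (-1) ^ m * de_moivre m k (\<lambda>j. 1 / (of_nat j + 2))))))"
    by (simp add: PF_nth sum_distrib_left sum_distrib_right algebra_simps)
  also have "\<dots> = beta s v"
    unfolding beta_def
    by (simp add: sum_distrib_left powr_add powr_realpow algebra_simps)
  finally show ?thesis by simp
qed


definition psi :: "complex \<Rightarrow> complex" where "psi = eval_fps PsiF"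

lemma PsiF_alt: "PsiF = fps_const 2 * fps_shift 2 (fps_X - fps_ln 1)"
proof (rule fps_ext)
  fix n
  have "(fps_X - fps_ln (1::complex)) $ (n + 2) = (-1) ^ n / (of_nat n + 2)"
    by (simp add: fps_ln_nth add.commute)
  then show "PsiF $ n = (fps_const 2 * fps_shift 2 (fps_X - fps_ln 1)) $ n"
    by (simp add: PsiF_def)
qed

lemma PsiF_radius: "fps_conv_radius PsiF \<ge> 1"
proof -
  have "fps_conv_radius (fps_X - fps_ln (1::complex)) \<ge> min (fps_conv_radius fps_X) (fps_conv_radius (fps_ln (1::complex)))"
    using fps_conv_radius_diff[of "fps_X::complex fps" "fps_ln 1"] by simp
  then have "fps_conv_radius (fps_X - fps_ln (1::complex)) \<ge> 1" by simp
  then show ?thesis unfolding PsiF_alt by (subst fps_conv_radius_cmult_left) auto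
qed

lemma psi_formula:
  assumes "norm z < 1" "z \<noteq> 0"
  shows "psi z * z^2 = 2 * (z - ln (1 + z))"
proof -
  define f where "f = (\<lambda>n. - ((-z)^n) / of_nat n)"
  have fs: "f sums ln (1 + z)" unfolding f_def by (rule Ln_series') fact
  have "(\<lambda>i. f (i + 2)) sums (ln (1 + z) - sum f {..<2})"
    using sums_iff_shift'[of f 2 "ln (1 + z)"] fs by blast
  moreover have "sum f {..<2} = z" by (simp add: f_def numeral_2_eq_2)
  ultimately have "(\<lambda>i. f (i + 2)) sums (ln (1 + z) - z)" by simp
  then have "(\<lambda>i. (-2 / z^2) * f (i + 2)) sums ((-2 / z^2) * (ln (1 + z) - z))"
    by (rule sums_mult)
  moreover have "(\<lambda>i. (-2 / z^2) * f (i + 2)) = (\<lambda>i. PsiF $ i * z ^ i)"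
  proof
    fix i
    have "(-z) ^ (i + 2) = (-1)^i * z^i * z^2" by (simp only: power_add power_minus[of z]) simp
    then show "(-2 / z^2) * f (i + 2) = PsiF $ i * z ^ i"
      using assms(2) by (simp add: f_def PsiF_def add.commute mult.assoc)
  qed
  ultimately have "(\<lambda>i. PsiF $ i * z ^ i) sums ((-2 / z^2) * (ln (1 + z) - z))" by simp
  then have "psi z = (-2 / z^2) * (ln (1 + z) - z)"
    by (simp add: psi_def eval_fps_def sums_iff)
  then show ?thesis using assms(2) by (simp add: field_simps)
qed

lemma psi_0: "psi 0 = 1" by (simp add: psi_def eval_fps_at_0 PsiF_def)

definition pr :: "real \<Rightarrow> real" where
  "pr x = (if x = 0 then 1 else 2 * (x - ln (1 + x)) / x^2)"

lemma psi_real: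
  assumes "\<bar>x\<bar> < 1"
  shows "psi (of_real x) = of_real (pr x)"
proof (cases "x = 0")
  case True then show ?thesis by (simp add: psi_0 pr_def)
next
  case False
  have "psi (of_real x) * (of_real x)^2 = 2 * (of_real x - ln (1 + of_real x))"
    using assms False by (intro psi_formula) auto
  moreover have "ln (1 + complex_of_real x) = of_real (ln (1 + x))"
    using assms by (subst Ln_of_real[symmetric]) auto
  ultimately show ?thesis using False by (simp add: pr_def field_simps)
qed

lemma ln_less_self': assumes "x > -1" "x \<noteq> 0" shows "ln (1 + x) < (x::real)"
proof -
  define y where "y = sqrt (1 + x)"
  have p: "0 < 1 + x" using assms(1) by linarith
  have ypos: "0 < y" using p by (simp add: y_def)
  have y2: "y * y = 1 + x" using p by (simp add: y_def)
  have "ln (1 + x) = ln (y * y)" by (simp add: y2)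
  also have "\<dots> = 2 * ln y" using ypos by (simp add: ln_mult)
  also have "\<dots> \<le> 2 * (y - 1)" using ln_le_minus_one[OF ypos] by (intro mult_left_mono) auto
  also have "\<dots> < x"
  proof -
    have "y \<noteq> 1" using y2 assms(2) by auto
    then have "0 < (y - 1) * (y - 1)" by (metis not_real_square_gt_zero right_minus_eq)
    then show ?thesis using y2 by (simp add: algebra_simps)
  qed
  finally show ?thesis .
qed

lemma pr_pos: assumes "\<bar>x\<bar> < 1" shows "pr x > 0"
  using ln_less_self'[of x] assms by (auto simp: pr_def)

lemma pr_cont: "continuous_on {-1/2..1/2} pr"
proof -
  have "continuous_on {-1/2..1/2} (\<lambda>x. Re (psi (of_real x)))"
    unfolding psi_def
  proof (intro continuous_intros continuous_on_eval_fps')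
    show "(\<lambda>x. complex_of_real x) ` {- 1 / 2..1 / 2} \<subseteq> eball 0 (fps_conv_radius PsiF)"
    proof
      fix z assume "z \<in> (\<lambda>x. complex_of_real x) ` {- 1 / 2..1 / 2}"
      then have "norm z < 1" by auto
      then have "ereal (norm z) < 1" by simp
      also have "\<dots> \<le> fps_conv_radius PsiF" by (rule PsiF_radius)
      finally show "z \<in> eball 0 (fps_conv_radius PsiF)" by (simp add: eball_def dist_norm)
    qed
  qed
  also have "?this \<longleftrightarrow> ?thesis"
    by (intro continuous_on_cong) (auto simp: psi_real)
  finally show ?thesis .
qed

lemma pr_min: "\<exists>m>0. \<forall>x\<in>{-1/2..1/2}. m \<le> pr x"
proof -
  obtain x0 where "x0 \<in> {-1/2..1/2::real}" "\<forall>y\<in>{-1/2..1/2}. pr x0 \<le> pr y"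
    using continuous_attains_inf[OF compact_Icc _ pr_cont] by auto
  moreover have "pr x0 > 0" using calculation(1) by (intro pr_pos) auto
  ultimately show ?thesis by blast
qed


definition Wc :: "complex \<Rightarrow> complex" where "Wc z = z * (1 + (psi z - 1)) powr (1/2)"
definition Ec :: "complex \<Rightarrow> nat \<Rightarrow> complex \<Rightarrow> complex" where
  "Ec v S z = (1 + z) powr v - (\<Sum>s<S. cc v s * (Wc z ^ s * deriv Wc z))"

lemma psi_exp: "psi has_fps_expansion PsiF"
  unfolding psi_def
proof (rule eval_fps_has_fps_expansion)
  have "(0::ereal) < 1" by simp
  also have "\<dots> \<le> fps_conv_radius PsiF" by (rule PsiF_radius)
  finally show "0 < fps_conv_radius PsiF" .
qed

lemma Wc_exp: "Wc has_fps_expansion WF"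
proof -
  have "(\<lambda>z. psi z - 1) has_fps_expansion BF" unfolding BF_def
    by (intro has_fps_expansion_diff psi_exp has_fps_expansion_1)
  then have "((\<lambda>x. (1 + x) powr (1/2)) \<circ> (\<lambda>z. psi z - 1)) has_fps_expansion PF (1/2)"
    unfolding PF_def by (intro has_fps_expansion_compose has_fps_expansion_binomial_complex BF0)
  then have "(\<lambda>z. z * ((\<lambda>x. (1 + x) powr (1/2)) \<circ> (\<lambda>z. psi z - 1)) z) has_fps_expansion fps_X * PF (1/2)"
    by (intro has_fps_expansion_mult has_fps_expansion_fps_X)
  then show ?thesis by (simp add: Wc_def[abs_def] WF_def o_def)
qed

lemma power_exp:
  fixes f :: "complex \<Rightarrow> complex"
  shows "f has_fps_expansion F \<Longrightarrow> (\<lambda>z. f z ^ n) has_fps_expansion F ^ n"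
  by (induction n) (auto intro!: has_fps_expansion_mult)

lemma Ec_exp: "Ec v S has_fps_expansion EF v S"
  unfolding Ec_def[abs_def] EF_def
  by (intro has_fps_expansion_diff has_fps_expansion_binomial_complex has_fps_expansion_sum
        has_fps_expansion_cmult_left has_fps_expansion_mult power_exp Wc_exp has_fps_expansion_deriv)

lemma local_bound:
  fixes f :: "complex \<Rightarrow> complex" and F :: "complex fps"
  assumes "f has_fps_expansion F" "\<And>j. j < S \<Longrightarrow> F $ j = 0"
  shows "\<exists>B. eventually (\<lambda>z. norm (f z) \<le> B * norm z ^ S) (nhds 0)"
proof -
  define G where "G = fps_shift S F"
  have FG: "F = G * fps_X ^ S"
    by (rule fps_ext) (simp add: G_def fps_X_power_mult_right_nth assms(2))
  have rad: "fps_conv_radius F > 0" using assms(1) by (simp add: has_fps_expansion_def)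
  have radG: "fps_conv_radius G = fps_conv_radius F" by (simp add: G_def)
  have "isCont (eval_fps G) 0" using rad radG by (intro continuous_eval_fps) (simp add: zero_ereal_def)
  then have "((\<lambda>z. norm (eval_fps G z)) \<longlongrightarrow> norm (eval_fps G 0)) (at 0)"
    by (intro tendsto_norm) (simp add: isCont_def)
  then have "eventually (\<lambda>z. norm (eval_fps G z) < norm (eval_fps G 0) + 1) (at 0)"
    by (rule order_tendstoD) simp
  then have E3: "eventually (\<lambda>z. norm (eval_fps G z) \<le> norm (eval_fps G 0) + 1) (nhds 0)"
    unfolding eventually_at_filter by eventually_elim auto
  have E1: "eventually (\<lambda>z. eval_fps F z = f z) (nhds 0)"
    using assms(1) by (simp add: has_fps_expansion_def)
  have E2: "eventually (\<lambda>z. z \<in> eball 0 (fps_conv_radius F)) (nhds 0)"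
    using rad by (intro eventually_nhds_in_open) (auto simp: zero_ereal_def)
  have "eventually (\<lambda>z. norm (f z) \<le> (norm (eval_fps G 0) + 1) * norm z ^ S) (nhds 0)"
    using E1 E2 E3
  proof eventually_elim
    case (elim z)
    have "f z = eval_fps (G * fps_X ^ S) z" using elim FG by simp
    also have "\<dots> = eval_fps G z * z ^ S"
      using elim radG by (subst eval_fps_mult) (auto simp: eball_def dist_norm)
    finally have "norm (f z) = norm (eval_fps G z) * norm z ^ S" by (simp add: norm_mult norm_power)
    also have "\<dots> \<le> (norm (eval_fps G 0) + 1) * norm z ^ S"
      using elim by (intro mult_right_mono) auto
    finally show ?case .
  qed
  then show ?thesis by blast
qed

lemma Ec_bound: "\<exists>B d. d > 0 \<and> (\<forall>z. norm z < d \<longrightarrow> norm (Ec v S z) \<le> B * norm z ^ S)"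
proof -
  obtain B where "eventually (\<lambda>z. norm (Ec v S z) \<le> B * norm z ^ S) (nhds 0)"
    using local_bound[OF Ec_exp EF_vanish] by blast
  then obtain d where "d > 0" "\<forall>z. dist z 0 < d \<longrightarrow> norm (Ec v S z) \<le> B * norm z ^ S"
    unfolding eventually_nhds_metric by blast
  then show ?thesis by (auto simp: dist_norm)
qed

lemma Wc_holo: "\<exists>d>0. Wc holomorphic_on ball 0 d"
proof -
  obtain s where "open s" "0 \<in> s" "Wc holomorphic_on s"
    using has_fps_expansion_imp_holomorphic[OF Wc_exp] by metis
  then obtain d where "d > 0" "ball 0 d \<subseteq> s" using open_contains_ball by blast
  then show ?thesis using \<open>Wc holomorphic_on s\<close> holomorphic_on_subset by blast
qed


definition J :: "nat \<Rightarrow> real \<Rightarrow> real" where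
  "J s a = Gamma ((real s + 1)/2) / (2 * a powr ((real s + 1)/2))"

lemma Gamma_half_nat: "Gamma (real k + 1/2) = sqrt pi * fact (2*k) / (4^k * fact k)"
proof (induction k)
  case 0 then show ?case by (simp add: Gamma_one_half_real)
next
  case (Suc k)
  have nz: "real k + 1/2 \<notin> \<int>\<^sub>\<le>\<^sub>0" using nonpos_Ints_nonpos[of "real k + 1/2"] by force
  have "Gamma (real (Suc k) + 1/2) = Gamma ((real k + 1/2) + 1)" by (simp add: algebra_simps)
  also have "\<dots> = (real k + 1/2) * Gamma (real k + 1/2)" by (rule Gamma_plus1[OF nz])
  also have "\<dots> = (real k + 1/2) * (sqrt pi * fact (2*k) / (4^k * fact k))" by (simp add: Suc)
  also have "\<dots> = sqrt pi * fact (2 * Suc k) / (4 ^ Suc k * fact (Suc k))"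
  proof -
    have f1: "fact (2 * Suc k) = (2 * real k + 2) * ((2 * real k + 1) * fact (2 * k))"
      by (simp add: fact_Suc algebra_simps)
    have f2: "fact (Suc k) = (real k + 1) * fact k" by (simp add: fact_Suc algebra_simps)
    have C: "(4 ^ Suc k * fact (Suc k) :: real) \<noteq> 0" by simp
    have "(real k + 1/2) * (sqrt pi * fact (2*k) / (4^k * fact k)) * (4 ^ Suc k * fact (Suc k)) =
          sqrt pi * fact (2 * Suc k)"
      unfolding f1 f2 by (simp add: field_simps)
    then show ?thesis using C by (simp add: eq_divide_eq)
  qed
  finally show ?case .
qed

lemma gauss_moment:
  "has_bochner_integral lborel (\<lambda>x. indicator {0..} x *\<^sub>R (exp (- (x^2)) * x^s)) (Gamma ((real s + 1)/2) / 2)"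
proof (cases "even s")
  case True
  then obtain k where k: "s = 2 * k" by (auto elim: evenE)
  have val: "Gamma ((real (2*k) + 1)/2) / 2 = (sqrt pi / 2) * (fact (2 * k) / (2 ^ (2 * k) * fact k))"
  proof -
    have eq: "(real (2*k) + 1)/2 = real k + 1/2" by simp
    show ?thesis by (subst eq, subst Gamma_half_nat) (simp add: power_mult)
  qed
  have "has_bochner_integral lborel (\<lambda>x. indicator {0..} x *\<^sub>R (exp (- (x^2)) * x^(2*k)))
     ((sqrt pi / 2) * (fact (2 * k) / (2 ^ (2 * k) * fact k)))"
    by (rule gaussian_moment_even_pos)
  then show ?thesis unfolding k val .
next
  case False
  then obtain k where k: "s = 2 * k + 1" by (auto elim: oddE)
  have val: "Gamma ((real (2*k+1) + 1)/2) / 2 = fact k / 2"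
  proof -
    have eq: "(real (2*k+1) + 1)/2 = 1 + of_nat k" by simp
    show ?thesis by (subst eq, subst Gamma_fact) simp
  qed
  have "has_bochner_integral lborel (\<lambda>x. indicator {0..} x *\<^sub>R (exp (- (x^2)) * x^(2*k+1)))
     (fact k / 2 :: real)"
    by (rule gaussian_moment_odd_pos)
  then show ?thesis unfolding k val .
qed

lemma gauss_scaled:
  assumes "a > 0"
  shows "has_bochner_integral lborel (\<lambda>w. indicator {0..} w *\<^sub>R (exp (- a * w^2) * w^s)) (J s a)"
proof -
  define c where "c = sqrt a"
  have c: "c > 0" using assms by (simp add: c_def)
  have c2: "c^2 = a" using assms by (simp add: c_def)
  define f where "f = (\<lambda>x::real. indicator {0..} x *\<^sub>R (exp (- (x^2)) * x^s))"
  have "has_bochner_integral lborel (\<lambda>x. f (0 + c * x)) ((Gamma ((real s + 1)/2) / 2) /\<^sub>R \<bar>c\<bar>)"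
    using gauss_moment[of s] c unfolding f_def[symmetric]
    by (subst lborel_has_bochner_integral_real_affine_iff[symmetric]) auto
  then have "has_bochner_integral lborel (\<lambda>x. (1 / c^s) * f (0 + c * x)) ((1 / c^s) * ((Gamma ((real s + 1)/2) / 2) /\<^sub>R \<bar>c\<bar>))"
    by (rule has_bochner_integral_mult_right)
  moreover have "(\<lambda>x. (1 / c^s) * f (0 + c * x)) = (\<lambda>w. indicator {0..} w *\<^sub>R (exp (- a * w^2) * w^s))"
  proof
    fix x
    have "indicator {0..} (c * x) = (indicator {0..} x :: real)"
      using c by (auto simp: indicator_def zero_le_mult_iff)
    then show "(1 / c^s) * f (0 + c * x) = indicator {0..} x *\<^sub>R (exp (- a * x^2) * x^s)"
      using c c2 by (simp add: f_def power_mult_distrib field_simps)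
  qed
  moreover have "(1 / c^s) * ((Gamma ((real s + 1)/2) / 2) /\<^sub>R \<bar>c\<bar>) = J s a"
  proof -
    have "a powr ((real s + 1)/2) = c ^ (s + 1)"
    proof -
      have "a powr ((real s + 1)/2) = (a powr (1/2)) powr (real (s + 1))"
        by (simp add: powr_powr algebra_simps)
      also have "\<dots> = (a powr (1/2)) ^ (s + 1)" using assms by (intro powr_realpow) simp
      also have "\<dots> = c ^ (s + 1)" using assms by (simp add: c_def powr_half_sqrt)
      finally show ?thesis .
    qed
    then show ?thesis using c by (simp add: J_def field_simps)
  qed
  ultimately show ?thesis by simp
qed

lemma hk_bochner:
  fixes G a :: real
  assumes "G \<ge> 0"
  shows "integral {0..G} (\<lambda>w. exp (- a * w^2) * w^s) =
         (\<integral>w. exp (- a * w^2) * w^s * indicator {0..G} w \<partial>lborel)"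
    and "integrable lborel (\<lambda>w. exp (- a * w^2) * w^s * indicator {0..G} w)"
proof -
  show int: "integrable lborel (\<lambda>w. exp (- a * w^2) * w^s * indicator {0..G} w)"
    by (rule borel_integrable_atLeastAtMost[where f="\<lambda>w. exp (- a * w^2) * w^s"]) (intro continuous_intros)
  define I where "I = (\<integral>w. exp (- a * w^2) * w^s * indicator {0..G} w \<partial>lborel)"
  have "((\<lambda>w. exp (- a * w^2) * w^s * indicator {0..G} w) has_integral I) UNIV"
    unfolding I_def by (rule has_integral_integral_lborel[OF int])
  also have "(\<lambda>w. exp (- a * w^2) * w^s * indicator {0..G} w) =
             (\<lambda>w. if w \<in> {0..G} then exp (- a * w^2) * w^s else 0)"
    by (auto simp: indicator_def)
  finally have "((\<lambda>w. exp (- a * w^2) * w^s) has_integral I) {0..G}"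
    by (subst (asm) has_integral_restrict_UNIV)
  then have "((\<lambda>w. exp (- a * w^2) * w^s) has_integral
          (\<integral>w. exp (- a * w^2) * w^s * indicator {0..G} w \<partial>lborel)) {0..G}"
    by (simp add: I_def)
  then show "integral {0..G} (\<lambda>w. exp (- a * w^2) * w^s) =
         (\<integral>w. exp (- a * w^2) * w^s * indicator {0..G} w \<partial>lborel)"
    by (rule integral_unique)
qed

lemma trunc_le:
  fixes G a :: real
  assumes "G \<ge> 0" "a > 0"
  shows "integral {0..G} (\<lambda>w. exp (- a * w^2) * w^s) \<le> J s a"
proof -
  have I: "has_bochner_integral lborel (\<lambda>w. indicator {0..} w *\<^sub>R (exp (- a * w^2) * w^s)) (J s a)"
    by (rule gauss_scaled[OF assms(2)])
  have "(\<integral>w. exp (- a * w^2) * w^s * indicator {0..G} w \<partial>lborel) \<le>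
        (\<integral>w. indicator {0..} w *\<^sub>R (exp (- a * w^2) * w^s) \<partial>lborel)"
    using hk_bochner(2)[OF assms(1), of a s] I
    by (intro integral_mono) (auto simp: has_bochner_integral_iff indicator_def)
  then show ?thesis using hk_bochner(1)[OF assms(1), of a s] I
    by (simp add: has_bochner_integral_iff)
qed

lemma trunc_err:
  fixes G a b :: real
  assumes "G \<ge> 0" "0 < b" "b \<le> a"
  shows "\<bar>J s a - integral {0..G} (\<lambda>w. exp (- a * w^2) * w^s)\<bar> \<le> exp (- (a - b) * G^2) * J s b"
proof -
  have a: "a > 0" using assms by linarith
  have Ia: "has_bochner_integral lborel (\<lambda>w. indicator {0..} w *\<^sub>R (exp (- a * w^2) * w^s)) (J s a)"
    by (rule gauss_scaled[OF a])
  have Ib: "has_bochner_integral lborel (\<lambda>w. exp (- (a - b) * G^2) * (indicator {0..} w *\<^sub>R (exp (- b * w^2) * w^s)))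
     (exp (- (a - b) * G^2) * J s b)"
    by (rule has_bochner_integral_mult_right, rule gauss_scaled[OF assms(2)])
  note H = hk_bochner[OF assms(1), of a s]
  have D: "has_bochner_integral lborel (\<lambda>w. indicator {0..} w *\<^sub>R (exp (- a * w^2) * w^s) - exp (- a * w^2) * w^s * indicator {0..G} w)
      (J s a - integral {0..G} (\<lambda>w. exp (- a * w^2) * w^s))"
    unfolding H(1) by (intro has_bochner_integral_diff Ia has_bochner_integral_integrable H(2))
  have pw: "0 \<le> indicator {0..} w *\<^sub>R (exp (- a * w^2) * w^s) - exp (- a * w^2) * w^s * indicator {0..G} w
         \<and> indicator {0..} w *\<^sub>R (exp (- a * w^2) * w^s) - exp (- a * w^2) * w^s * indicator {0..G} w
            \<le> exp (- (a - b) * G^2) * (indicator {0..} w *\<^sub>R (exp (- b * w^2) * w^s))" for w :: real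
  proof (cases "w < 0")
    case True then show ?thesis by (simp add: indicator_def)
  next
    case False
    show ?thesis
    proof (cases "w \<le> G")
      case True then show ?thesis using False by (simp add: indicator_def)
    next
      case False2: False
      have "G^2 \<le> w^2" using False2 assms(1) by (intro power_mono) auto
      then have "(a - b) * G^2 \<le> (a - b) * w^2" using assms by (intro mult_left_mono) auto
      then have "exp (- a * w^2) \<le> exp (- (a - b) * G^2) * exp (- b * w^2)"
        by (simp add: exp_add[symmetric] algebra_simps)
      then have "exp (- a * w^2) * w^s \<le> exp (- (a - b) * G^2) * exp (- b * w^2) * w^s"
        using False by (intro mult_right_mono) auto
      then show ?thesis using False False2 by (simp add: indicator_def)
    qed
  qed
  have "J s a - integral {0..G} (\<lambda>w. exp (- a * w^2) * w^s) \<le> exp (- (a - b) * G^2) * J s b"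
  proof -
    have "integral\<^sup>L lborel (\<lambda>w. indicator {0..} w *\<^sub>R (exp (- a * w^2) * w^s) - exp (- a * w^2) * w^s * indicator {0..G} w)
       \<le> integral\<^sup>L lborel (\<lambda>w. exp (- (a - b) * G^2) * (indicator {0..} w *\<^sub>R (exp (- b * w^2) * w^s)))"
      by (rule integral_mono[OF integrable.intros[OF D] integrable.intros[OF Ib]]) (use pw in blast)
    then show ?thesis
      using has_bochner_integral_integral_eq[OF D] has_bochner_integral_integral_eq[OF Ib] by simp
  qed
  moreover have "0 \<le> J s a - integral {0..G} (\<lambda>w. exp (- a * w^2) * w^s)"
  proof -
    have "0 \<le> integral\<^sup>L lborel (\<lambda>w. indicator {0..} w *\<^sub>R (exp (- a * w^2) * w^s) - exp (- a * w^2) * w^s * indicator {0..G} w)"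
      by (rule Bochner_Integration.integral_nonneg) (use pw in blast)
    then show ?thesis using has_bochner_integral_integral_eq[OF D] by simp
  qed
  ultimately show ?thesis by simp
qed


definition phi :: "real \<Rightarrow> real \<Rightarrow> real" where "phi \<sigma> t = \<sigma> * t - ln (1 + \<sigma> * t)"
definition gg :: "real \<Rightarrow> real \<Rightarrow> real" where "gg \<sigma> t = sqrt (2 * phi \<sigma> t)"
definition gd :: "real \<Rightarrow> real \<Rightarrow> real" where
  "gd \<sigma> t = (if t = 0 then 1 else t / ((1 + \<sigma> * t) * gg \<sigma> t))"
definition Er :: "complex \<Rightarrow> nat \<Rightarrow> real \<Rightarrow> real \<Rightarrow> complex" where
  "Er v S \<sigma> t = (1 + complex_of_real (\<sigma> * t)) powr v -
     (\<Sum>s<S. cc v s * (complex_of_real \<sigma> ^ s * (complex_of_real (gg \<sigma> t) ^ s * complex_of_real (gd \<sigma> t))))"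

locale sig =
  fixes \<sigma> :: real
  assumes sig: "\<sigma> = 1 \<or> \<sigma> = -1"
begin

lemma sig_sq [simp]: "\<sigma> * \<sigma> = 1" using sig by auto
lemma sig_abs [simp]: "\<bar>\<sigma>\<bar> = 1" using sig by auto
lemma sig_abs_mult [simp]: "\<bar>\<sigma> * t\<bar> = \<bar>t\<bar>" by (simp add: abs_mult)
lemma sig_pos: "t \<in> {0..1/2} \<Longrightarrow> 1 + \<sigma> * t > 0" using sig by auto

lemma phi_pr: assumes "t \<in> {0..1/2}" shows "2 * phi \<sigma> t = t^2 * pr (\<sigma> * t)"
proof (cases "t = 0")
  case True then show ?thesis by (simp add: phi_def)
next
  case False
  then have "\<sigma> * t \<noteq> 0" using sig by auto
  moreover have "(\<sigma> * t)^2 = t^2" by (simp add: power_mult_distrib power2_eq_square)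
  ultimately show ?thesis using False by (simp add: pr_def phi_def)
qed

lemma pr_pos': "t \<in> {0..1/2} \<Longrightarrow> pr (\<sigma> * t) > 0"
  by (intro pr_pos) auto

lemma phi_nonneg: "t \<in> {0..1/2} \<Longrightarrow> phi \<sigma> t \<ge> 0"
  using phi_pr[of t] pr_pos'[of t] by (smt (verit) zero_le_mult_iff zero_le_power2)

lemma gg_eq: assumes "t \<in> {0..1/2}" shows "gg \<sigma> t = t * sqrt (pr (\<sigma> * t))"
proof -
  have "gg \<sigma> t = sqrt (t^2 * pr (\<sigma> * t))" using phi_pr[OF assms] by (simp add: gg_def)
  also have "\<dots> = t * sqrt (pr (\<sigma> * t))" using assms by (simp add: real_sqrt_mult)
  finally show ?thesis .
qed

lemma gg_sq: "t \<in> {0..1/2} \<Longrightarrow> gg \<sigma> t ^ 2 = 2 * phi \<sigma> t"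
  using phi_nonneg[of t] by (simp add: gg_def)

lemma gg_pos: "t \<in> {0<..1/2} \<Longrightarrow> gg \<sigma> t > 0"
  using gg_eq[of t] pr_pos'[of t] by auto

lemma gg_0 [simp]: "gg \<sigma> 0 = 0" by (simp add: gg_def phi_def)

lemma phi_lb: "\<exists>m>0. \<forall>t\<in>{0..1/2}. phi \<sigma> t \<ge> m * t^2"
proof -
  obtain m where m: "m > 0" "\<forall>x\<in>{-1/2..1/2}. m \<le> pr x" using pr_min by blast
  have "phi \<sigma> t \<ge> (m/2) * t^2" if t: "t \<in> {0..1/2}" for t
  proof -
    have "\<sigma> * t \<in> {-1/2..1/2}" using t sig by auto
    then have "m \<le> pr (\<sigma> * t)" using m by blast
    then have "m * t^2 \<le> pr (\<sigma> * t) * t^2" by (intro mult_right_mono) auto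
    then show ?thesis using phi_pr[OF t] by (simp add: algebra_simps)
  qed
  then show ?thesis using m by (intro exI[of _ "m/2"]) auto
qed

lemma gg_deriv:
  assumes "t \<in> {0<..1/2}"
  shows "(gg \<sigma> has_real_derivative gd \<sigma> t) (at t)"
proof -
  have t: "t \<in> {0..1/2}" "t \<noteq> 0" using assms by auto
  have p: "1 + \<sigma> * t > 0" using sig_pos[OF t(1)] .
  have gp: "gg \<sigma> t > 0" using gg_pos[OF assms] .
  have ph: "2 * (\<sigma> * t - ln (1 + \<sigma> * t)) > 0" using gp by (simp add: gg_def phi_def)
  have "((\<lambda>t. sqrt (2 * (\<sigma> * t - ln (1 + \<sigma> * t)))) has_real_derivative
        (2 * (\<sigma> - \<sigma> / (1 + \<sigma> * t))) / (2 * sqrt (2 * (\<sigma> * t - ln (1 + \<sigma> * t))))) (at t)"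
    using p ph by (auto intro!: derivative_eq_intros simp: field_simps)
  moreover have "(2 * (\<sigma> - \<sigma> / (1 + \<sigma> * t))) / (2 * sqrt (2 * (\<sigma> * t - ln (1 + \<sigma> * t)))) = gd \<sigma> t"
  proof -
    have "\<sigma> - \<sigma> / (1 + \<sigma> * t) = (\<sigma> * \<sigma>) * t / (1 + \<sigma> * t)" using p by (simp add: field_simps)
    then show ?thesis using t gp by (simp add: gd_def gg_def phi_def)
  qed
  ultimately show ?thesis by (simp add: gg_def[abs_def] phi_def)
qed

end

lemma Wc_real: assumes "\<bar>x\<bar> < 1" shows "Wc (of_real x) = of_real (x * sqrt (pr x))"
proof -
  have pp: "pr x > 0" using pr_pos[OF assms] .
  have h: "(1/2::complex) = of_real (1/2)" by simp
  have "(complex_of_real (pr x)) powr (1/2) = of_real (pr x powr (1/2))"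
    using pp by (simp only: h) (rule powr_of_real, simp)
  also have "\<dots> = of_real (sqrt (pr x))" using pp by (simp add: powr_half_sqrt)
  finally have e: "(complex_of_real (pr x)) powr (1/2) = of_real (sqrt (pr x))" .
  have "Wc (of_real x) = of_real x * (complex_of_real (pr x)) powr (1/2)"
    by (simp add: Wc_def psi_real[OF assms])
  then show ?thesis by (simp add: e)
qed

context sig
begin

lemma gg_rel: assumes "t \<in> {0..1/2}" shows "Wc (of_real (\<sigma> * t)) = of_real \<sigma> * of_real (gg \<sigma> t)"
proof -
  have "\<bar>\<sigma> * t\<bar> < 1" using assms by auto
  then have "Wc (of_real (\<sigma> * t)) = of_real (\<sigma> * t * sqrt (pr (\<sigma> * t)))" by (rule Wc_real)
  also have "\<dots> = of_real \<sigma> * of_real (gg \<sigma> t)" using gg_eq[OF assms] by simp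
  finally show ?thesis .
qed

lemma gd_deriv_Wc:
  obtains d where "d > 0" "d \<le> 1/2" "\<And>t. 0 < t \<Longrightarrow> t < d \<Longrightarrow> of_real (gd \<sigma> t) = deriv Wc (of_real (\<sigma> * t))"
proof -
  obtain d0 where d0: "d0 > 0" "Wc holomorphic_on ball 0 d0" using Wc_holo by blast
  define d where "d = min d0 (1/2)"
  have "of_real (gd \<sigma> t) = deriv Wc (of_real (\<sigma> * t))" if t: "0 < t" "t < d" for t
  proof -
    define h where "h = (\<lambda>u. of_real \<sigma> * Wc (of_real \<sigma> * u))"
    have inball: "of_real \<sigma> * of_real t \<in> ball (0::complex) d0"
      using t by (simp add: d_def norm_mult)
    have dW: "(Wc has_field_derivative deriv Wc (of_real \<sigma> * of_real t)) (at (of_real \<sigma> * of_real t))"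
      by (rule holomorphic_derivI[OF d0(2) open_ball inball])
    have "((\<lambda>u. Wc (of_real \<sigma> * u)) has_field_derivative deriv Wc (of_real \<sigma> * of_real t) * of_real \<sigma>) (at (of_real t))"
      by (rule DERIV_chain2[where f=Wc and g="\<lambda>u. of_real \<sigma> * u" and x="of_real t", OF dW])
         (auto intro!: derivative_eq_intros)
    then have "(h has_field_derivative of_real \<sigma> * (deriv Wc (of_real \<sigma> * of_real t) * of_real \<sigma>)) (at (of_real t))"
      unfolding h_def by (rule DERIV_cmult)
    moreover have "of_real \<sigma> * (deriv Wc (of_real \<sigma> * of_real t) * of_real \<sigma>) = deriv Wc (of_real (\<sigma> * t))"
    proof -
      have "complex_of_real \<sigma> * of_real \<sigma> = 1" by (simp flip: of_real_mult)
      then show ?thesis by (simp add: algebra_simps)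
    qed
    ultimately have "(h has_field_derivative deriv Wc (of_real (\<sigma> * t))) (at (of_real t))" by simp
    then have hv: "((\<lambda>r. h (of_real r)) has_vector_derivative deriv Wc (of_real (\<sigma> * t))) (at t)"
      by (rule has_vector_derivative_real_field)
    have gv: "((\<lambda>r. complex_of_real (gg \<sigma> r)) has_vector_derivative of_real (gd \<sigma> t)) (at t)"
      by (rule has_vector_derivative_of_real[OF gg_deriv]) (use t in \<open>auto simp: d_def\<close>)
    have "((\<lambda>r. complex_of_real (gg \<sigma> r)) has_vector_derivative deriv Wc (of_real (\<sigma> * t))) (at t)"
    proof (rule has_vector_derivative_transform_within_open[OF hv, of "{0<..<d}"])
      fix y assume y: "y \<in> {0<..<d}"
      then have "y \<in> {0..1/2}" by (auto simp: d_def)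
      then have "Wc (of_real (\<sigma> * y)) = of_real \<sigma> * of_real (gg \<sigma> y)" by (rule gg_rel)
      then have "h (of_real y) = (of_real \<sigma> * of_real \<sigma>) * of_real (gg \<sigma> y)"
        by (simp add: h_def)
      also have "complex_of_real \<sigma> * of_real \<sigma> = 1" by (simp flip: of_real_mult)
      finally show "h (of_real y) = complex_of_real (gg \<sigma> y)" by simp
    qed (use t in auto)
    then show ?thesis using gv vector_derivative_unique_at by blast
  qed
  then show thesis using that[of d] d0 by (auto simp: d_def)
qed

lemma Er_near:
  obtains d where "d > 0" "d \<le> 1/2" "\<And>t. 0 < t \<Longrightarrow> t < d \<Longrightarrow> Er v S \<sigma> t = Ec v S (of_real (\<sigma> * t))"
proof -
  obtain d where d: "d > 0" "d \<le> 1/2" "\<And>t. 0 < t \<Longrightarrow> t < d \<Longrightarrow> of_real (gd \<sigma> t) = deriv Wc (of_real (\<sigma> * t))"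
    using gd_deriv_Wc by blast
  have "Er v S \<sigma> t = Ec v S (of_real (\<sigma> * t))" if t: "0 < t" "t < d" for t
  proof -
    have tt: "t \<in> {0..1/2}" using t d by auto
    show ?thesis unfolding Er_def Ec_def gg_rel[OF tt] d(3)[OF t]
      by (simp add: power_mult_distrib mult.assoc)
  qed
  then show thesis using that d by blast
qed

lemma Er_zero: assumes "S > 0" shows "Er v S \<sigma> 0 = 0"
proof -
  obtain S' where S': "S = Suc S'" using assms by (cases S) auto
  have c0: "cc v 0 = 1" by (simp add: cc_def)
  show ?thesis unfolding Er_def S' sum.lessThan_Suc_shift by (simp add: c0 gd_def)
qed

lemma Hc_real: assumes "1 + x > 0" shows "(1 + complex_of_real x) powr v = exp (v * of_real (ln (1 + x)))"
proof -
  have "1 + complex_of_real x = of_real (1 + x)" by simp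
  moreover have "Ln (complex_of_real (1 + x)) = of_real (ln (1 + x))" using assms by (rule Ln_of_real)
  moreover have "complex_of_real (1 + x) \<noteq> 0" by (metis assms of_real_eq_0_iff less_irrefl)
  ultimately show ?thesis by (simp add: powr_def)
qed

lemma Er_cont: assumes "a > 0" shows "continuous_on {a..1/2} (Er v S \<sigma>)"
proof -
  have "continuous_on {a..1/2} (\<lambda>t. exp (v * of_real (ln (1 + \<sigma> * t))) -
     (\<Sum>s<S. cc v s * (complex_of_real \<sigma> ^ s * (complex_of_real (sqrt (2 * (\<sigma> * t - ln (1 + \<sigma> * t)))) ^ s *
        complex_of_real (t / ((1 + \<sigma> * t) * sqrt (2 * (\<sigma> * t - ln (1 + \<sigma> * t)))))))))"
  proof -
    have pos: "\<forall>t\<in>{a..1/2}. 0 < 1 + \<sigma> * t" using sig_pos assms by auto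
    have nz: "\<forall>t\<in>{a..1/2}. (1 + \<sigma> * t) * sqrt (2 * (\<sigma> * t - ln (1 + \<sigma> * t))) \<noteq> 0"
    proof
      fix t assume t: "t \<in> {a..1/2}"
      then have t': "t \<in> {0..1/2}" "t \<in> {0<..1/2}" using assms by auto
      show "(1 + \<sigma> * t) * sqrt (2 * (\<sigma> * t - ln (1 + \<sigma> * t))) \<noteq> 0"
        using sig_pos[OF t'(1)] gg_pos[OF t'(2)] by (simp add: gg_def phi_def)
    qed
    show ?thesis by (intro continuous_intros) (use pos nz in auto)
  qed
  also have "?this \<longleftrightarrow> ?thesis"
  proof (intro continuous_on_cong refl)
    fix t assume t: "t \<in> {a..1/2}"
    then have t': "t \<in> {0..1/2}" "t \<noteq> 0" using assms by auto
    show "exp (v * of_real (ln (1 + \<sigma> * t))) -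
     (\<Sum>s<S. cc v s * (complex_of_real \<sigma> ^ s * (complex_of_real (sqrt (2 * (\<sigma> * t - ln (1 + \<sigma> * t)))) ^ s *
        complex_of_real (t / ((1 + \<sigma> * t) * sqrt (2 * (\<sigma> * t - ln (1 + \<sigma> * t))))))))
       = Er v S \<sigma> t"
      unfolding Er_def Hc_real[OF sig_pos[OF t'(1)]] using t'(2) by (simp add: gd_def gg_def phi_def)
  qed
  finally show ?thesis .
qed

lemma Er_bound: assumes "S > 0" shows "\<exists>C\<ge>0. \<forall>t\<in>{0..1/2}. norm (Er v S \<sigma> t) \<le> C * t^S"
proof -
  obtain B d1 where d1: "d1 > 0" "\<And>z. norm z < d1 \<Longrightarrow> norm (Ec v S z) \<le> B * norm z ^ S"
    using Ec_bound by blast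
  obtain d2 where d2: "d2 > 0" "d2 \<le> 1/2" "\<And>t. 0 < t \<Longrightarrow> t < d2 \<Longrightarrow> Er v S \<sigma> t = Ec v S (of_real (\<sigma> * t))"
    using Er_near by blast
  define d where "d = min d1 d2 / 2"
  have d: "d > 0" "d < d1" "d < d2" using d1 d2 by (auto simp: d_def)
  have "compact (Er v S \<sigma> ` {d..1/2})"
    by (rule compact_continuous_image[OF Er_cont[OF d(1)] compact_Icc])
  then obtain M where M: "\<And>t. t \<in> {d..1/2} \<Longrightarrow> norm (Er v S \<sigma> t) \<le> M"
    using compact_imp_bounded bounded_iff by (metis image_eqI)
  define C where "C = \<bar>B\<bar> + \<bar>M\<bar> / d ^ S"
  have "norm (Er v S \<sigma> t) \<le> C * t^S" if t: "t \<in> {0..1/2}" for t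
  proof (cases "t = 0")
    case True then show ?thesis using Er_zero[OF assms] assms by (simp add: power_0_left)
  next
    case False
    show ?thesis
    proof (cases "t < d")
      case True
      have "norm (Er v S \<sigma> t) = norm (Ec v S (of_real (\<sigma> * t)))"
        using d2(3)[of t] True False t d by auto
      also have "\<dots> \<le> B * norm (complex_of_real (\<sigma> * t)) ^ S"
        using d1(2)[of "of_real (\<sigma> * t)"] True d t by (auto simp: norm_mult)
      also have "\<dots> = B * t ^ S" using t by (simp add: norm_mult)
      also have "\<dots> \<le> C * t ^ S"
      proof (intro mult_right_mono)
        have "0 \<le> \<bar>M\<bar> / d ^ S" using d by simp
        then show "B \<le> C" unfolding C_def by linarith
      qed (use t in auto)
      finally show ?thesis .
    next
      case False2: False
      have "norm (Er v S \<sigma> t) \<le> \<bar>M\<bar>" using M[of t] t False2 by auto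
      also have "\<dots> = \<bar>M\<bar> / d ^ S * d ^ S" using d by simp
      also have "\<dots> \<le> \<bar>M\<bar> / d ^ S * t ^ S"
        using False2 d by (intro mult_left_mono power_mono) auto
      also have "\<dots> \<le> C * t ^ S" using t by (intro mult_right_mono) (auto simp: C_def)
      finally show ?thesis .
    qed
  qed
  moreover have "C \<ge> 0" using d by (auto simp: C_def)
  ultimately show ?thesis by blast
qed

end


definition Fi :: "complex \<Rightarrow> real \<Rightarrow> nat \<Rightarrow> real \<Rightarrow> complex" where
  "Fi v \<sigma> n t = complex_of_real (exp (- real n * phi \<sigma> t)) * (1 + complex_of_real (\<sigma> * t)) powr v"

context sig
begin

lemma Fi_cont: "continuous_on {0..1/2} (Fi v \<sigma> n)"
proof -
  have pos: "\<forall>t\<in>{0..1/2}. 0 < 1 + \<sigma> * t" using sig_pos by auto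
  have "continuous_on {0..1/2} (\<lambda>t. complex_of_real (exp (- real n * (\<sigma> * t - ln (1 + \<sigma> * t)))) *
           exp (v * of_real (ln (1 + \<sigma> * t))))"
    by (intro continuous_intros) (use pos in auto)
  also have "?this \<longleftrightarrow> ?thesis"
  proof (intro continuous_on_cong refl)
    fix t assume t: "t \<in> {0..1/2::real}"
    show "complex_of_real (exp (- real n * (\<sigma> * t - ln (1 + \<sigma> * t)))) *
           exp (v * of_real (ln (1 + \<sigma> * t))) = Fi v \<sigma> n t"
      using Hc_real[OF sig_pos[OF t], of v] by (simp add: Fi_def phi_def)
  qed
  finally show ?thesis .
qed

lemma gg_cont: "continuous_on {0..1/2} (gg \<sigma>)"
proof -
  have pos: "\<forall>t\<in>{0..1/2}. 0 < 1 + \<sigma> * t" using sig_pos by auto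
  have "continuous_on {0..1/2} (\<lambda>t. sqrt (2 * (\<sigma> * t - ln (1 + \<sigma> * t))))"
    by (intro continuous_intros) (use pos in auto)
  then show ?thesis by (simp add: gg_def[abs_def] phi_def)
qed

lemma gg_half_pos: "gg \<sigma> (1/2) > 0" by (rule gg_pos) auto

lemma sub_int:
  "((\<lambda>t. gd \<sigma> t * (exp (- (real n/2) * (gg \<sigma> t)^2) * (gg \<sigma> t)^s)) has_integral
      integral {0..gg \<sigma> (1/2)} (\<lambda>w. exp (- (real n/2) * w^2) * w^s)) {0..1/2}"
proof -
  have "compact (gg \<sigma> ` {0..1/2})" by (rule compact_continuous_image[OF gg_cont compact_Icc])
  then obtain D where D: "\<And>t. t \<in> {0..1/2} \<Longrightarrow> norm (gg \<sigma> t) \<le> D"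
    using compact_imp_bounded bounded_iff by (metis image_eqI)
  have "((\<lambda>x. gd \<sigma> x *\<^sub>R (\<lambda>w. exp (- (real n/2) * w^2) * w^s) (gg \<sigma> x)) has_integral
     integral {gg \<sigma> 0..gg \<sigma> (1/2)} (\<lambda>w. exp (- (real n/2) * w^2) * w^s) -
     integral {gg \<sigma> (1/2)..gg \<sigma> 0} (\<lambda>w. exp (- (real n/2) * w^2) * w^s)) {0..1/2}"
  proof (rule has_integral_substitution_general[where s="{0}" and a=0 and b="1/2" and g="gg \<sigma>" and c="-D" and d=D
        and f="\<lambda>w. exp (- (real n/2) * w^2) * w^s" and g'="gd \<sigma>"])
    show "gg \<sigma> ` {0..1/2} \<subseteq> {-D..D}"
    proof
      fix y assume "y \<in> gg \<sigma> ` {0..1/2}"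
      then obtain x where x: "x \<in> {0..1/2}" "y = gg \<sigma> x" by auto
      show "y \<in> {-D..D}" using D[OF x(1)] x(2) by (auto simp: abs_le_iff)
    qed
    show "continuous_on {- D..D} (\<lambda>w. exp (- (real n / 2) * w\<^sup>2) * w ^ s)"
      by (intro continuous_intros)
    show "continuous_on {0..1/2} (gg \<sigma>)" by (rule gg_cont)
    fix x :: real assume "x \<in> {0..1/2} - {0}"
    then have "x \<in> {0<..1/2}" by auto
    then show "(gg \<sigma> has_real_derivative gd \<sigma> x) (at x within {0..1/2})"
      by (rule has_field_derivative_at_within[OF gg_deriv])
  qed auto
  moreover have "{gg \<sigma> (1/2)..gg \<sigma> 0} = {}" using gg_half_pos by auto
  ultimately show ?thesis by simp
qed

lemma Fi_decomp:
  assumes t: "t \<in> {0..1/2}"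
  shows "Fi v \<sigma> n t = complex_of_real (exp (- real n * phi \<sigma> t)) * Er v S \<sigma> t +
     (\<Sum>s<S. cc v s * complex_of_real \<sigma> ^ s *
        complex_of_real (gd \<sigma> t * (exp (- (real n/2) * (gg \<sigma> t)^2) * (gg \<sigma> t)^s)))"
proof -
  have e: "exp (- (real n/2) * (gg \<sigma> t)^2) = exp (- real n * phi \<sigma> t)" using gg_sq[OF t] by simp
  define E where "E = complex_of_real (exp (- real n * phi \<sigma> t))"
  define H where "H = (1 + complex_of_real (\<sigma> * t)) powr v"
  define T where "T = (\<lambda>s. cc v s * (complex_of_real \<sigma> ^ s * (complex_of_real (gg \<sigma> t) ^ s * complex_of_real (gd \<sigma> t))))"
  have Er: "Er v S \<sigma> t = H - sum T {..<S}" by (simp add: Er_def H_def T_def)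
  have "(\<Sum>s<S. cc v s * complex_of_real \<sigma> ^ s *
        complex_of_real (gd \<sigma> t * (exp (- real n * phi \<sigma> t) * (gg \<sigma> t)^s))) = (\<Sum>s<S. E * T s)"
    by (intro sum.cong refl) (simp add: E_def T_def)
  also have "\<dots> = E * sum T {..<S}" by (simp add: sum_distrib_left)
  finally have "Fi v \<sigma> n t = E * Er v S \<sigma> t + (\<Sum>s<S. cc v s * complex_of_real \<sigma> ^ s *
        complex_of_real (gd \<sigma> t * (exp (- real n * phi \<sigma> t) * (gg \<sigma> t)^s)))"
    unfolding Er by (simp add: Fi_def E_def H_def algebra_simps)
  then show ?thesis unfolding e E_def .
qed

end

lemma J_scale: assumes "c > 0" "x > 0" shows "J s (x * c) = J s c / x powr ((real s + 1)/2)"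
  using assms by (simp add: J_def powr_mult field_simps)

context sig
begin

lemma main_sig:
  assumes "S > 0"
  shows "\<exists>K G. G > 0 \<and> (\<forall>n\<ge>1. norm (integral {0..1/2} (Fi v \<sigma> n) -
      (\<Sum>s<S. cc v s * complex_of_real \<sigma> ^ s * complex_of_real (J s (real n/2))))
      \<le> K / real n powr ((real S + 1)/2) + K * exp (- (real n/2 - 1/2) * G^2))"
proof -
  obtain C where C: "C \<ge> 0" "\<And>t. t \<in> {0..1/2} \<Longrightarrow> norm (Er v S \<sigma> t) \<le> C * t^S"
    using Er_bound[OF assms] by blast
  obtain m where m: "m > 0" "\<And>t. t \<in> {0..1/2} \<Longrightarrow> phi \<sigma> t \<ge> m * t^2"
    using phi_lb by blast
  define G where "G = gg \<sigma> (1/2)"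
  have G: "G > 0" using gg_half_pos by (simp add: G_def)
  define K1 where "K1 = C * J S m"
  define K2 where "K2 = (\<Sum>s<S. norm (cc v s) * J s (1/2))"
  have J_nonneg: "J s a \<ge> 0" if "a > 0" for s a using that by (simp add: J_def)
  have K1: "K1 \<ge> 0" using C m J_nonneg by (simp add: K1_def)
  have K2: "K2 \<ge> 0" using J_nonneg by (simp add: K2_def sum_nonneg)
  have bound: "norm (integral {0..1/2} (Fi v \<sigma> n) -
      (\<Sum>s<S. cc v s * complex_of_real \<sigma> ^ s * complex_of_real (J s (real n/2))))
      \<le> (K1 + K2) / real n powr ((real S + 1)/2) + (K1 + K2) * exp (- (real n/2 - 1/2) * G^2)"
    if n: "n \<ge> 1" for n
  proof -
    define IG where "IG = (\<lambda>s. integral {0..G} (\<lambda>w. exp (- (real n/2) * w^2) * w^s))"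
    define sub where "sub = (\<lambda>s t. gd \<sigma> t * (exp (- (real n/2) * (gg \<sigma> t)^2) * (gg \<sigma> t)^s))"
    define ER where "ER = (\<lambda>t. complex_of_real (exp (- real n * phi \<sigma> t)) * Er v S \<sigma> t)"
    define SS where "SS = (\<Sum>s<S. cc v s * complex_of_real \<sigma> ^ s * complex_of_real (IG s))"
    have hs: "(sub s has_integral IG s) {0..1/2}" for s
      unfolding sub_def IG_def G_def by (rule sub_int)
    have hsum: "((\<lambda>t. \<Sum>s<S. cc v s * complex_of_real \<sigma> ^ s * complex_of_real (sub s t)) has_integral SS) {0..1/2}"
      unfolding SS_def
      by (intro has_integral_sum finite_lessThan has_integral_mult_right has_integral_of_real hs)
    have hF: "(Fi v \<sigma> n has_integral integral {0..1/2} (Fi v \<sigma> n)) {0..1/2}"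
      using integrable_continuous_interval[OF Fi_cont] by (simp add: has_integral_integral)
    have hE: "(ER has_integral (integral {0..1/2} (Fi v \<sigma> n) - SS)) {0..1/2}"
    proof (rule has_integral_eq[OF _ has_integral_diff[OF hF hsum]])
      fix t assume t: "t \<in> {0..1/2::real}"
      show "Fi v \<sigma> n t - (\<Sum>s<S. cc v s * complex_of_real \<sigma> ^ s * complex_of_real (sub s t)) = ER t"
        using Fi_decomp[OF t, of v n S] by (simp add: ER_def sub_def)
    qed
    have nm: "real n * m > 0" using n m by simp
    have bnd_int: "(\<lambda>t. C * (exp (- (real n * m) * t^2) * t^S)) integrable_on {0..1/2}"
      by (intro integrable_continuous_interval continuous_intros)
    have "norm (integral {0..1/2} ER) \<le> integral {0..1/2} (\<lambda>t. C * (exp (- (real n * m) * t^2) * t^S))"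
    proof (rule integral_norm_bound_integral)
      show "ER integrable_on {0..1/2}" using hE by blast
      show "(\<lambda>t. C * (exp (- (real n * m) * t^2) * t^S)) integrable_on {0..1/2}" by (rule bnd_int)
      fix t assume t: "t \<in> {0..1/2::real}"
      have "exp (- real n * phi \<sigma> t) \<le> exp (- (real n * m) * t^2)"
        using m(2)[OF t] n by (simp add: mult_left_mono)
      then have "norm (ER t) \<le> exp (- (real n * m) * t^2) * (C * t^S)"
        unfolding ER_def norm_mult using C(2)[OF t]
        by (intro mult_mono) auto
      then show "norm (ER t) \<le> C * (exp (- (real n * m) * t^2) * t^S)" by (simp add: algebra_simps)
    qed
    also have "\<dots> = C * integral {0..1/2} (\<lambda>t. exp (- (real n * m) * t^2) * t^S)"
      by (rule integral_mult_right)
    also have "\<dots> \<le> C * J S (real n * m)"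
      using C(1) trunc_le[of "1/2" "real n * m" S] nm by (intro mult_left_mono) auto
    also have "\<dots> = K1 / real n powr ((real S + 1)/2)"
      using J_scale[OF m(1), of "real n" S] n by (simp add: K1_def)
    finally have E1: "norm (integral {0..1/2} ER) \<le> K1 / real n powr ((real S + 1)/2)" .
    have "norm (SS - (\<Sum>s<S. cc v s * complex_of_real \<sigma> ^ s * complex_of_real (J s (real n/2))))
        = norm (\<Sum>s<S. cc v s * complex_of_real \<sigma> ^ s * complex_of_real (IG s - J s (real n/2)))"
      unfolding SS_def by (simp add: sum_subtractf algebra_simps)
    also have "\<dots> \<le> (\<Sum>s<S. norm (cc v s * complex_of_real \<sigma> ^ s * complex_of_real (IG s - J s (real n/2))))"
      by (rule norm_sum)
    also have "\<dots> \<le> (\<Sum>s<S. norm (cc v s) * (exp (- (real n/2 - 1/2) * G^2) * J s (1/2)))"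
    proof (rule sum_mono)
      fix s assume "s \<in> {..<S}"
      have "\<bar>J s (real n/2) - IG s\<bar> \<le> exp (- (real n/2 - 1/2) * G^2) * J s (1/2)"
        unfolding IG_def using G n by (intro trunc_err) auto
      then show "norm (cc v s * complex_of_real \<sigma> ^ s * complex_of_real (IG s - J s (real n/2)))
          \<le> norm (cc v s) * (exp (- (real n/2 - 1/2) * G^2) * J s (1/2))"
      proof -
        have eq: "norm (cc v s * complex_of_real \<sigma> ^ s * complex_of_real (IG s - J s (real n/2)))
            = norm (cc v s) * \<bar>J s (real n/2) - IG s\<bar>"
          by (simp add: norm_mult norm_power abs_minus_commute del: of_real_diff)
        show ?thesis unfolding eq using \<open>\<bar>J s (real n/2) - IG s\<bar> \<le> _\<close>
          by (intro mult_left_mono) auto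
      qed
    qed
    also have "\<dots> = K2 * exp (- (real n/2 - 1/2) * G^2)"
      by (simp add: K2_def sum_distrib_right algebra_simps)
    finally have E2: "norm (SS - (\<Sum>s<S. cc v s * complex_of_real \<sigma> ^ s * complex_of_real (J s (real n/2))))
        \<le> K2 * exp (- (real n/2 - 1/2) * G^2)" .
    have "integral {0..1/2} (Fi v \<sigma> n) -
      (\<Sum>s<S. cc v s * complex_of_real \<sigma> ^ s * complex_of_real (J s (real n/2)))
      = integral {0..1/2} ER + (SS - (\<Sum>s<S. cc v s * complex_of_real \<sigma> ^ s * complex_of_real (J s (real n/2))))"
      using integral_unique[OF hE] by simp
    also have "norm \<dots> \<le> K1 / real n powr ((real S + 1)/2) + K2 * exp (- (real n/2 - 1/2) * G^2)"
      using norm_triangle_ineq[of "integral {0..1/2} ER" "SS - (\<Sum>s<S. cc v s * complex_of_real \<sigma> ^ s * complex_of_real (J s (real n/2)))"] E1 E2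
      by linarith
    also have "\<dots> \<le> (K1 + K2) / real n powr ((real S + 1)/2) + (K1 + K2) * exp (- (real n/2 - 1/2) * G^2)"
      using K1 K2 by (intro add_mono divide_right_mono mult_right_mono) auto
    finally show ?thesis .
  qed
  then show ?thesis using G by blast
qed

end


definition fI :: "complex \<Rightarrow> nat \<Rightarrow> real \<Rightarrow> complex" where
  "fI v n = (\<lambda>z::real. complex_of_real (exp (real n * (1 - z + ln z))) * complex_of_real z powr v)"

lemma fI_cont: "continuous_on {1/2..3/2} (fI v n)"
proof -
  have pos: "\<forall>z\<in>{1/2..3/2::real}. 0 < z" by auto
  have "continuous_on {1/2..3/2} (\<lambda>z::real. complex_of_real (exp (real n * (1 - z + ln z))) * exp (v * of_real (ln z)))"
    by (intro continuous_intros) (use pos in auto)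
  also have "?this \<longleftrightarrow> ?thesis"
  proof (intro continuous_on_cong refl)
    fix z :: real assume z: "z \<in> {1/2..3/2}"
    then have "z > 0" by auto
    then have "complex_of_real z powr v = exp (v * of_real (ln z))"
      by (simp add: powr_def Ln_of_real)
    then show "complex_of_real (exp (real n * (1 - z + ln z))) * exp (v * of_real (ln z)) = fI v n z"
      by (simp add: fI_def)
  qed
  finally show ?thesis .
qed

lemma fI_Fi: assumes "\<sigma> = 1 \<or> \<sigma> = -1" "t \<in> {0..1/2}" shows "fI v n (1 + \<sigma> * t) = Fi v \<sigma> n t"
proof -
  have "real n * (1 - (1 + \<sigma> * t) + ln (1 + \<sigma> * t)) = - real n * phi \<sigma> t"
    by (simp add: phi_def algebra_simps)
  then show ?thesis by (simp add: fI_def Fi_def)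
qed

lemma conv_right: "integral {1..3/2} (fI v n) = integral {0..1/2} (Fi v 1 n)"
proof -
  have "((\<lambda>t. 1 *\<^sub>R fI v n (1 + t)) has_integral
     (integral {1 + 0..1 + 1/2} (fI v n) - integral {1 + 1/2..1 + 0} (fI v n))) {0..1/2}"
  proof (rule has_integral_substitution_general[where s="{}" and a=0 and b="1/2" and g="\<lambda>t. 1 + t" and c="1/2" and d="3/2"
        and f="fI v n" and g'="\<lambda>_. 1"])
    show "continuous_on {1/2..3/2} (fI v n)" by (rule fI_cont)
    fix x :: real assume "x \<in> {0..1/2} - {}"
    show "((\<lambda>t. 1 + t) has_real_derivative 1) (at x within {0..1/2})"
      by (auto intro!: derivative_eq_intros)
  next
    show "continuous_on {0..1/2} (\<lambda>t::real. 1 + t)" by (intro continuous_intros)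
  next
    show "(\<lambda>t::real. 1 + t) ` {0..1/2} \<subseteq> {1/2..3/2}" by auto
  qed auto
  then have "((\<lambda>t. fI v n (1 + t)) has_integral integral {1..3/2} (fI v n)) {0..1/2}" by simp
  then have "((Fi v 1 n) has_integral integral {1..3/2} (fI v n)) {0..1/2}"
  proof (rule has_integral_eq[rotated])
    fix t :: real assume "t \<in> {0..1/2}"
    then show "fI v n (1 + t) = Fi v 1 n t" using fI_Fi[of 1 t v n] by simp
  qed
  then show ?thesis by (simp add: integral_unique)
qed

lemma conv_left: "integral {1/2..1} (fI v n) = integral {0..1/2} (Fi v (-1) n)"
proof -
  have "((\<lambda>t. (-1) *\<^sub>R fI v n (1 - t)) has_integral
     (integral {1 - 0..1 - 1/2} (fI v n) - integral {1 - 1/2..1 - 0} (fI v n))) {0..1/2}"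
  proof (rule has_integral_substitution_general[where s="{}" and a=0 and b="1/2" and g="\<lambda>t. 1 - t" and c="1/2" and d="3/2"
        and f="fI v n" and g'="\<lambda>_. -1"])
    show "continuous_on {1/2..3/2} (fI v n)" by (rule fI_cont)
    fix x :: real assume "x \<in> {0..1/2} - {}"
    show "((\<lambda>t. 1 - t) has_real_derivative -1) (at x within {0..1/2})"
      by (auto intro!: derivative_eq_intros)
  next
    show "continuous_on {0..1/2} (\<lambda>t::real. 1 - t)" by (intro continuous_intros)
  next
    show "(\<lambda>t::real. 1 - t) ` {0..1/2} \<subseteq> {1/2..3/2}" by auto
  qed auto
  then have "((\<lambda>t. - fI v n (1 - t)) has_integral - integral {1/2..1} (fI v n)) {0..1/2}" by simp
  then have "((\<lambda>t. fI v n (1 - t)) has_integral integral {1/2..1} (fI v n)) {0..1/2}"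
    using has_integral_neg[of "\<lambda>t. - fI v n (1 - t)" "- integral {1/2..1} (fI v n)" "{0..1/2}"] by simp
  then have "((Fi v (-1) n) has_integral integral {1/2..1} (fI v n)) {0..1/2}"
  proof (rule has_integral_eq[rotated])
    fix t :: real assume "t \<in> {0..1/2}"
    then show "fI v n (1 - t) = Fi v (-1) n t" using fI_Fi[of "-1" t v n] by simp
  qed
  then show ?thesis by (simp add: integral_unique)
qed

lemma J_half: assumes "n > 0"
  shows "J s (real n/2) = Gamma ((real s + 1)/2) * 2 powr ((real s - 1)/2) / real n powr ((real s + 1)/2)"
proof -
  have "(real n / 2) powr ((real s + 1)/2) = real n powr ((real s + 1)/2) / 2 powr ((real s + 1)/2)"
    using assms by (simp add: powr_divide)
  moreover have "2 powr ((real s + 1)/2) = 2 powr ((real s - 1)/2) * 2"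
  proof -
    have eq: "(real s + 1)/2 = (real s - 1)/2 + 1" by (simp add: field_simps)
    show ?thesis by (subst eq) (simp add: powr_add)
  qed
  ultimately show ?thesis using assms by (simp add: J_def field_simps)
qed

lemma term_eq: assumes "n > 0"
  shows "complex_of_real (Gamma ((real s + 1)/2)) * c * beta s v / complex_of_real (real n powr ((real s + 1)/2))
       = cc v s * c * complex_of_real (J s (real n/2))"
  unfolding J_half[OF assms] beta_eq using assms by (simp add: field_simps)

lemma final_general:
  assumes "S > 0" "\<sigma> = 1 \<or> \<sigma> = -1"
  assumes conv: "\<And>n. I n = integral {0..1/2} (Fi v \<sigma> n)"
  shows "(\<lambda>n::nat. I n - (\<Sum>s<S. complex_of_real (Gamma ((real s + 1)/2)) * complex_of_real \<sigma> ^ s * beta s v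
                 / complex_of_real (real n powr ((real s + 1)/2))))
          \<in> O(\<lambda>n. complex_of_real (1 / real n powr ((real S + 1) / 2)))"
proof -
  interpret sig \<sigma> by standard (rule assms(2))
  obtain K G where G: "G > 0" and KG: "\<And>n. n \<ge> 1 \<Longrightarrow> norm (integral {0..1/2} (Fi v \<sigma> n) -
      (\<Sum>s<S. cc v s * complex_of_real \<sigma> ^ s * complex_of_real (J s (real n/2))))
      \<le> K / real n powr ((real S + 1)/2) + K * exp (- (real n/2 - 1/2) * G^2)"
    using main_sig[OF assms(1), of v] by blast
  have ev1: "eventually (\<lambda>n::nat. exp (- (real n/2 - 1/2) * G^2) \<le> 1 / real n powr ((real S + 1)/2)) at_top"
    using G by real_asymp
  have ev2: "eventually (\<lambda>n::nat. n \<ge> 1) at_top" by (rule eventually_ge_at_top)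
  show ?thesis
  proof (rule bigoI[where c="2 * \<bar>K\<bar>"])
    show "eventually (\<lambda>n. norm (I n - (\<Sum>s<S. complex_of_real (Gamma ((real s + 1)/2)) * complex_of_real \<sigma> ^ s * beta s v
                 / complex_of_real (real n powr ((real s + 1)/2))))
          \<le> 2 * \<bar>K\<bar> * norm (complex_of_real (1 / real n powr ((real S + 1) / 2)))) at_top"
      using ev1 ev2
    proof eventually_elim
      case (elim n)
      have npos: "n > 0" using elim by simp
      have "(\<Sum>s<S. complex_of_real (Gamma ((real s + 1)/2)) * complex_of_real \<sigma> ^ s * beta s v
                 / complex_of_real (real n powr ((real s + 1)/2))) =
            (\<Sum>s<S. cc v s * complex_of_real \<sigma> ^ s * complex_of_real (J s (real n/2)))"
        by (intro sum.cong refl term_eq npos)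
      then have "norm (I n - (\<Sum>s<S. complex_of_real (Gamma ((real s + 1)/2)) * complex_of_real \<sigma> ^ s * beta s v
                 / complex_of_real (real n powr ((real s + 1)/2))))
          \<le> K / real n powr ((real S + 1)/2) + K * exp (- (real n/2 - 1/2) * G^2)"
        using KG[OF elim(2)] by (simp add: conv)
      also have "\<dots> \<le> \<bar>K\<bar> * (1 / real n powr ((real S + 1)/2)) + \<bar>K\<bar> * (1 / real n powr ((real S + 1)/2))"
      proof (intro add_mono)
        show "K / real n powr ((real S + 1)/2) \<le> \<bar>K\<bar> * (1 / real n powr ((real S + 1)/2))"
          by (simp add: divide_right_mono)
        have "K * exp (- (real n/2 - 1/2) * G^2) \<le> \<bar>K\<bar> * exp (- (real n/2 - 1/2) * G^2)"
          by (intro mult_right_mono) auto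
        also have "\<dots> \<le> \<bar>K\<bar> * (1 / real n powr ((real S + 1)/2))"
          using elim(1) by (intro mult_left_mono) auto
        finally show "K * exp (- (real n/2 - 1/2) * G^2) \<le> \<bar>K\<bar> * (1 / real n powr ((real S + 1)/2))" .
      qed
      also have "\<dots> = 2 * \<bar>K\<bar> * norm (complex_of_real (1 / real n powr ((real S + 1) / 2)))"
        by (simp add: norm_divide)
      finally show ?case .
    qed
  qed
qed

theorem proposition4p1:
  fixes v :: complex and S :: nat
  assumes "S > 0"
  shows "(\<lambda>n::nat. integral {1/2..1} (\<lambda>z::real. complex_of_real (exp (real n * (1 - z + ln z))) * complex_of_real z powr v)
            - (\<Sum>s<S. complex_of_real (Gamma ((real s + 1) / 2)) * (-1)^s * beta s v
                 / complex_of_real (real n powr ((real s + 1) / 2))))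
          \<in> O(\<lambda>n. complex_of_real (1 / real n powr ((real S + 1) / 2)))
       \<and> (\<lambda>n::nat. integral {1..3/2} (\<lambda>z::real. complex_of_real (exp (real n * (1 - z + ln z))) * complex_of_real z powr v)
            - (\<Sum>s<S. complex_of_real (Gamma ((real s + 1) / 2)) * beta s v
                 / complex_of_real (real n powr ((real s + 1) / 2))))
          \<in> O(\<lambda>n. complex_of_real (1 / real n powr ((real S + 1) / 2)))"
proof
  have "(\<lambda>n::nat. integral {1/2..1} (fI v n) - (\<Sum>s<S. complex_of_real (Gamma ((real s + 1)/2)) * complex_of_real (-1) ^ s * beta s v
                 / complex_of_real (real n powr ((real s + 1)/2))))
          \<in> O(\<lambda>n. complex_of_real (1 / real n powr ((real S + 1) / 2)))"
    by (rule final_general[OF assms]) (auto simp: conv_left)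
  then show "(\<lambda>n::nat. integral {1/2..1} (\<lambda>z::real. complex_of_real (exp (real n * (1 - z + ln z))) * complex_of_real z powr v)
            - (\<Sum>s<S. complex_of_real (Gamma ((real s + 1) / 2)) * (-1)^s * beta s v
                 / complex_of_real (real n powr ((real s + 1) / 2))))
          \<in> O(\<lambda>n. complex_of_real (1 / real n powr ((real S + 1) / 2)))"
    by (simp add: fI_def)
next
  have "(\<lambda>n::nat. integral {1..3/2} (fI v n) - (\<Sum>s<S. complex_of_real (Gamma ((real s + 1)/2)) * complex_of_real 1 ^ s * beta s v
                 / complex_of_real (real n powr ((real s + 1)/2))))
          \<in> O(\<lambda>n. complex_of_real (1 / real n powr ((real S + 1) / 2)))"
    by (rule final_general[OF assms]) (auto simp: conv_right)
  then show "(\<lambda>n::nat. integral {1..3/2} (\<lambda>z::real. complex_of_real (exp (real n * (1 - z + ln z))) * complex_of_real z powr v)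
            - (\<Sum>s<S. complex_of_real (Gamma ((real s + 1) / 2)) * beta s v
                 / complex_of_real (real n powr ((real s + 1) / 2))))
          \<in> O(\<lambda>n. complex_of_real (1 / real n powr ((real S + 1) / 2)))"
    by (simp add: fI_def)
qed


end
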